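(* Suppose assumptions (i), (ii), (iv) hold. There is a number $\lambda^*$ such that, if $\lambda \geq \lambda^*$, all trajectories of the system $$\begin{aligned} \dot\varrho &= 0,\qquad \dot w = s(\varrho,w),\qquad \dot z = f_0(\varrho,w,z),\\ \dot\chi &= (A-KC)\chi + b\,\beta^T(X,\chi_1+\tau_1)\tilde\theta + \Delta(\chi_1,\tau_1,\theta) + \varphi(\varrho,w,z),\\ \dot{\tilde\theta} &= -\beta(X,\chi_1+\tau_1)\chi_1 - \mathrm{dzv}_\ell(\tilde\theta+\theta(\varrho)),\\ \dot X &= FX + G\,\Omega(\chi_1+\tau_1), \end{aligned}$$ with initial conditions $(\varrho,w,z)\in \mathbf{Z}=P\times W\times Z$, are bounded.
   Context: Plant: $\dot z = f_0(\varrho,w,z)+f_1(\varrho,w,z,e)e$, $\dot e = q(\varrho,w,z,e)+u$, with $z\in\mathbb{R}^n$, $e,u\in\mathbb{R}$, driven by the exosystem $\dot\varrho=0$, $\dot w = s(\varrho,w)$; all functions $C^1$; $P\subset\mathbb{R}^p$, $W\subset\mathbb{R}^s$, $Z\subset\mathbb{R}^n$ compact. Set $\mathbf{z}=\mathrm{col}(\varrho,w,z)$, $\mathbf{f}_0(\mathbf{z})=\mathrm{col}(0,s(\varrho,w),f_0(\varrho,w,z))$, $c(\mathbf{z}) = -q(\varrho,w,z,0)$, $\mathbf{Z}=P\times W\times Z$. Assumption (i): $P\times W$ is a differential submanifold with boundary of $\mathbb{R}^p\times\mathbb{R}^s$, invariant for the exosystem. Assumption (ii): there is a compact $\mathcal{Z}\subset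 P\times W\times\mathbb{R}^n$ containing the positive orbit of $\mathbf{Z}$ under $\dot{\mathbf{z}}=\mathbf{f}_0(\mathbf{z})$; the $\omega$-limit set $\mathcal{A}_0=\omega(\mathbf{Z})$ is a differential submanifold with boundary; and there is $d_1>0$ such that $\mathbf{z}\in P\times W\times\mathbb{R}^n$, $\mathrm{dist}(\mathbf{z},\mathcal{A}_0)\le d_1$ imply $\mathbf{z}\in\mathbf{Z}$. Assumption (iv): there exist an integer $d$, a $C^1$ map $\tau:\mathcal{Z}\to\mathbb{R}^d$, a $C^0$ map $\theta:P\to\mathbb{R}^q$, the observable pair $(A,C)$ with $A$ the $d\times d$ upper shift matrix (ones on the superdiagonal, zeros elsewhere) and $C=(1\ 0\ \cdots\ 0)$, and $C^1$ maps $\phi:\mathbb{R}\to\mathbb{R}^d$, $\Omega:\mathbb{R}\to\mathbb{R}^{d\times q}$ (which may be taken with compact support, hence globally Lipschitz) such that $\frac{\partial\tau}{\partial\mathbf{z}}\mathbf{f}_0(\mathbf{z}) = A\tau(\mathbf{z})+\phi(C\tau(\mathbf{z}))+\Omega(C\tau(\mathbf{z}))\theta(\varrho)$ and $c(\mathbf{z})=C\tau(\mathbf{z})$ for all $\mathbf{z}\in\mathcal{A}_0$. Design quantities: $b=\mathrm{col}(1,b_2,\dots,b_d)$ where $\lambda^{d-1}+b_2\lambda^{d-2}+\dots+b_d$ has $d-1$ distinct roots with negative real part; $F$ is the $(d-1)\times(d-1)$ matrix with first column $-\mathrm{col}(b_2,\dots,b_d)$ plus ones on the superdiagonal (Hurwitz);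 $G=(-\mathrm{col}(b_2,\dots,b_d)\ \ I_{d-1})$ is $(d-1)\times d$; $X$ is $(d-1)\times q$, $M(X)=\mathrm{col}(0,X)$; $\beta(X,\xi_1)=[CAM(X)+C\Omega(\xi_1)]^T$; $K=Ab+\lambda b$ with $\lambda>0$; $\mathrm{dzv}_\ell$ applies componentwise a $C^1$ dead zone $\mathrm{dz}_\ell(x)$ equal to $0$ for $|x|\le\ell$ and to $x$ for $|x|\ge\ell+1$, with $\ell>\max_{\varrho\in P}|\theta(\varrho)|$. The system above is the zero dynamics (for output $e$) of the plant in closed loop with the controller $u=\xi_1+v$, $\dot\xi = A\xi+\phi(\xi_1)+\Omega(\xi_1)\hat\theta+H(X,\xi_1)v-M(X)\mathrm{dzv}_\ell(\hat\theta)$, $\dot{\hat\theta}=\beta(X,\xi_1)v-\mathrm{dzv}_\ell(\hat\theta)$, $\dot X=FX+G\Omega(\xi_1)$, $H=M(X)\beta+K$, written in coordinates $\tilde\theta=\hat\theta-\theta(\varrho)$, $\eta=\xi-M(X)\tilde\theta$, $\chi=\eta-\tau(\varrho,w,z)$; here $\tau_1$ is the first component of $\tau(\varrho,w,z)$, $\Delta(\chi_1,\tau_1,\theta)=\phi(\chi_1+\tau_1)-\phi(\chi_1)+[\Omega(\chi_1+\tau_1)-\Omega(\chi_1)]\theta(\varrho)$, and $\varphi(\varrho,w,z)=K(c-\tau_1)+A\tau+\phi(\tau_1)+\Omega(\tau_1)\theta(\varrho)-\frac{\partial\tau}{\partial z}f_0-\frac{\partial\tau}{\partial w}s$, which vanishes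 on $\mathcal{A}_0$. *)

theory Defs
  imports "HOL-Analysis.Analysis"
begin

definition C1_on :: "'a::real_normed_vector set \<Rightarrow> ('a \<Rightarrow> 'b::real_normed_vector) \<Rightarrow> bool" where
  "C1_on S f \<longleftrightarrow> (\<exists>f'. (\<forall>x\<in>S. (f has_derivative blinfun_apply (f' x)) (at x)) \<and> continuous_on S f')"

definition ode_sol :: "('a::real_normed_vector \<Rightarrow> 'a) \<Rightarrow> real set \<Rightarrow> (real \<Rightarrow> 'a) \<Rightarrow> bool" where
  "ode_sol f I x \<longleftrightarrow> (\<forall>t\<in>I. (x has_vector_derivative f (x t)) (at t within I))"

definition fwd_interval :: "real set \<Rightarrow> bool" where
  "fwd_interval I \<longleftrightarrow> is_interval I \<and> 0 \<in> I \<and> I \<subseteq> {0..}"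

definition invariant_set :: "('a::real_normed_vector \<Rightarrow> 'a) \<Rightarrow> 'a set \<Rightarrow> bool" where
  "invariant_set f S \<longleftrightarrow>
     (\<forall>I x. is_interval I \<and> ode_sol f I x \<and> (\<exists>t0\<in>I. x t0 \<in> S) \<longrightarrow> (\<forall>t\<in>I. x t \<in> S))"

definition omega_limit :: "('a::real_normed_vector \<Rightarrow> 'a) \<Rightarrow> 'a set \<Rightarrow> 'a set" where
  "omega_limit f B = {y. \<exists>tk xk. filterlim tk at_top sequentially \<and>
      (\<forall>k. xk k 0 \<in> B \<and> ode_sol f {0..} (xk k)) \<and> (\<lambda>k. xk k (tk k)) \<longlonglongrightarrow> y}"

definition C1_diffeo :: "'a::euclidean_space set \<Rightarrow> 'a set \<Rightarrow> ('a \<Rightarrow> 'a) \<Rightarrow> bool" where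
  "C1_diffeo U V \<psi> \<longleftrightarrow> open U \<and> open V \<and> bij_betw \<psi> U V \<and> C1_on U \<psi> \<and> C1_on V (inv_into U \<psi>)"

(* (C^1) differential submanifold with boundary: locally, after a C^1 change of
   coordinates, a relatively open piece of a linear subspace or of a half-subspace *)
definition submanifold_wb :: "'a::euclidean_space set \<Rightarrow> bool" where
  "submanifold_wb M \<longleftrightarrow>
     (\<forall>x\<in>M. \<exists>U V \<psi> (L::'a set) (l::'a \<Rightarrow> real).
        x \<in> U \<and> C1_diffeo U V \<psi> \<and> subspace L \<and> linear l \<and>
        \<psi> ` (U \<inter> M) = V \<inter> {y\<in>L. l y \<ge> 0})"

definition fbold :: "('p::real_normed_vector \<times> 'w \<Rightarrow> 'w) \<Rightarrow> ('p \<times> 'w \<times> 'z \<Rightarrow> 'z)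
     \<Rightarrow> 'p \<times> 'w \<times> 'z \<Rightarrow> 'p \<times> 'w \<times> 'z" where
  "fbold s f0 = (\<lambda>(\<rho>, w, z). (0, s (\<rho>, w), f0 (\<rho>, w, z)))"

(* Vectors of R^d are represented by functions nat => _, indices 0..d-1
   (index 0 = first component). *)

(* A v for the d x d upper shift matrix A *)
definition shiftA :: "nat \<Rightarrow> (nat \<Rightarrow> 'a::zero) \<Rightarrow> nat \<Rightarrow> 'a" where
  "shiftA d v i = (if i + 1 < d then v (i + 1) else 0)"

(* M(X) = col(0, X), rows of X indexed 0..d-2 *)
definition Mcol :: "(nat \<Rightarrow> 'a::zero) \<Rightarrow> nat \<Rightarrow> 'a" where
  "Mcol X i = (if i = 0 then 0 else X (i - 1))"

(* beta(X, xi1) = [C A M(X) + C Omega(xi1)]^T, rows of Omega(xi1) are Om xi1 i *)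
definition betav :: "nat \<Rightarrow> (nat \<Rightarrow> real^'q) \<Rightarrow> (real \<Rightarrow> nat \<Rightarrow> real^'q) \<Rightarrow> real \<Rightarrow> real^'q" where
  "betav d X Om xi1 = shiftA d (Mcol X) 0 + Om xi1 0"

(* entries of F (i,j < d-1) and of G (i < d-1, j < d) where b 0 = 1 and
   b 1, ..., b (d-1) stand for b_2, ..., b_d *)
definition FGmat :: "(nat \<Rightarrow> real) \<Rightarrow> nat \<Rightarrow> nat \<Rightarrow> real" where
  "FGmat b i j = (if j = 0 then - b (i + 1) else 0) + (if j = i + 1 then 1 else 0)"

(* K = A b + lambda b *)
definition Kvec :: "nat \<Rightarrow> (nat \<Rightarrow> real) \<Rightarrow> real \<Rightarrow> nat \<Rightarrow> real" where
  "Kvec d b lam i = shiftA d b i + lam * b i"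

definition dzv :: "(real \<Rightarrow> real) \<Rightarrow> real^'q \<Rightarrow> real^'q" where
  "dzv dz v = (\<chi> j. dz (v $ j))"

end

theory Submission
  imports Defs "HOL-Computational_Algebra.Polynomial"
begin


lemma lyap:
  fixes V V' :: "real \<Rightarrow> real"
  assumes I: "fwd_interval I"
    and der: "\<And>t. t\<in>I \<Longrightarrow> (V has_real_derivative V' t) (at t within I)"
    and le: "\<And>t. t\<in>I \<Longrightarrow> V' t \<le> - a * V t + c" and a: "a > 0"
  shows "\<forall>t\<in>I. V t \<le> max (V 0) (c/a)"
proof
  fix t assume t: "t \<in> I"
  have I0: "0 \<in> I" and t0: "t \<ge> 0" and iv: "is_interval I" using I t by (auto simp: fwd_interval_def)
  have sub: "{0..t} \<subseteq> I"
  proof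
    fix x assume "x \<in> {0..t}"
    then show "x \<in> I" using iv I0 t unfolding is_interval_1 by (meson atLeastAtMost_iff)
  qed
  define W where "W x = exp (a*x) * (V x - c/a)" for x
  define W' where "W' x = a * exp (a*x) * (V x - c/a) + exp (a*x) * V' x" for x
  have dW: "(W has_real_derivative W' x) (at x within {0..t})" if "x \<in> {0..t}" for x
  proof -
    have "(V has_real_derivative V' x) (at x within {0..t})"
      using DERIV_subset[OF der[of x] sub] sub that by auto
    then have v: "((\<lambda>x. V x - c/a) has_real_derivative V' x) (at x within {0..t})"
      by (auto intro!: derivative_eq_intros)
    have e: "((\<lambda>x. exp (a*x)) has_real_derivative (exp (a*x) * a)) (at x within {0..t})"
      by (auto intro!: derivative_eq_intros)
    show ?thesis unfolding W_def W'_def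
      using DERIV_mult[OF e v] by (simp add: algebra_simps)
  qed
  have W'n: "W' x \<le> 0" if "x \<in> {0..t}" for x
  proof -
    have "V' x \<le> - a * V x + c" using le sub that by auto
    then have "a * (V x - c/a) + V' x \<le> 0" using a by (simp add: algebra_simps)
    then have "exp (a*x) * (a * (V x - c/a) + V' x) \<le> 0"
      by (simp add: mult_nonneg_nonpos)
    then show ?thesis unfolding W'_def using a by (simp add: algebra_simps)
  qed
  obtain x where x: "x \<in> {0..t}" "W t - W 0 = W' x * (t - 0)"
    using mvt_very_simple[of 0 t W "\<lambda>x h. W' x * h"] t0 dW
    by (force intro: has_field_derivative_imp_has_derivative[THEN has_derivative_eq_rhs] simp: mult.commute)
  have "W' x * t \<le> 0" using W'n[OF x(1)] t0 by (simp add: mult_nonpos_nonneg)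
  then have "W t \<le> W 0" using x by simp
  then have "exp (a*t) * (V t - c/a) \<le> V 0 - c/a" unfolding W_def by simp
  moreover have "exp (a*t) \<ge> 1" using a t0 by simp
  ultimately show "V t \<le> max (V 0) (c/a)"
  proof (cases "V t \<le> c/a")
    case False
    then have "V t - c/a \<le> exp (a*t) * (V t - c/a)" using \<open>exp (a*t) \<ge> 1\<close>
      by (simp add: mult_le_cancel_right1)
    then show ?thesis using \<open>exp (a*t) * (V t - c/a) \<le> V 0 - c/a\<close> by simp
  qed simp
qed

lemma lagrange_coeffs:
  fixes R :: "complex set"
  assumes fin: "finite R" and cR: "card R = m"
  shows "\<exists>L. \<forall>c::nat\<Rightarrow>complex. \<forall>k<m. c k = (\<Sum>\<mu>\<in>R. (\<Sum>j<m. \<mu>^(m-1-j) * c j) * L \<mu> k)"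
proof -
  define Lg where "Lg \<mu> = smult (inverse (\<Prod>\<nu>\<in>R-{\<mu>}. (\<mu> - \<nu>))) (\<Prod>\<nu>\<in>R-{\<mu>}. [:-\<nu>, 1:])" for \<mu>
  have polyLg: "poly (Lg \<mu>) \<nu> = (if \<nu> = \<mu> then 1 else 0)" if "\<mu> \<in> R" "\<nu> \<in> R" for \<mu> \<nu>
  proof (cases "\<nu> = \<mu>")
    case True
    have "(\<Prod>\<nu>\<in>R-{\<mu>}. (\<mu> - \<nu>)) \<noteq> 0" using fin by (subst prod_zero_iff) auto
    then show ?thesis using True by (simp add: Lg_def poly_prod)
  next
    case False
    have "(\<Prod>x\<in>R-{\<mu>}. poly [:-x, 1:] \<nu>) = 0"
      using fin False that by (subst prod_zero_iff) auto
    then show ?thesis using False by (simp add: Lg_def poly_prod)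
  qed
  have degLg: "degree (Lg \<mu>) \<le> m - 1" if "\<mu> \<in> R" for \<mu>
  proof -
    have "degree (Lg \<mu>) \<le> degree (\<Prod>\<nu>\<in>R-{\<mu>}. [:-\<nu>, 1:])" unfolding Lg_def by (rule degree_smult_le)
    also have "\<dots> \<le> sum (degree \<circ> (\<lambda>\<nu>. [:-\<nu>, 1:])) (R-{\<mu>})" using fin by (intro degree_prod_sum_le) auto
    also have "\<dots> = card (R-{\<mu>})" by simp
    also have "\<dots> = m - 1" using fin cR that by simp
    finally show ?thesis .
  qed
  show ?thesis
  proof (intro exI allI impI)
    fix c :: "nat \<Rightarrow> complex" and k assume k: "k < m"
    define Q where "Q = (\<Sum>j<m. monom (c j) (m-1-j))"
    have polyQ: "poly Q \<mu> = (\<Sum>j<m. \<mu>^(m-1-j) * c j)" for \<mu>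
      unfolding Q_def by (simp add: poly_sum poly_monom mult.commute)
    have coeffQ: "coeff Q (m-1-k) = c k"
    proof -
      have "coeff Q (m-1-k) = (\<Sum>j<m. if m-1-j = m-1-k then c j else 0)"
        unfolding Q_def by (simp add: coeff_sum)
      also have "\<dots> = (\<Sum>j<m. if j = k then c j else 0)"
        using k by (intro sum.cong) auto
      also have "\<dots> = c k" using k by simp
      finally show ?thesis .
    qed
    define P2 where "P2 = (\<Sum>\<mu>\<in>R. smult (poly Q \<mu>) (Lg \<mu>))"
    have "Q = P2"
    proof (rule poly_eqI_degree[of R])
      fix \<nu> assume nu: "\<nu> \<in> R"
      have "poly P2 \<nu> = (\<Sum>\<mu>\<in>R. poly Q \<mu> * (if \<nu> = \<mu> then 1 else 0))"
        unfolding P2_def poly_sum using polyLg nu by (intro sum.cong) auto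
      also have "\<dots> = poly Q \<nu>" using fin nu by (simp add: if_distrib cong: if_cong)
      finally show "poly Q \<nu> = poly P2 \<nu>" by simp
    next
      have "degree Q \<le> m - 1" unfolding Q_def
        by (intro degree_sum_le) (auto intro: order.trans[OF degree_monom_le])
      then show "degree Q < card R" using k cR by simp
    next
      have "degree (smult (poly Q \<mu>) (Lg \<mu>)) \<le> m - 1" if "\<mu> \<in> R" for \<mu>
        using order.trans[OF degree_smult_le degLg[OF that]] .
      then have "degree P2 \<le> m - 1" unfolding P2_def using fin
        by (intro degree_sum_le) auto
      then show "degree P2 < card R" using k cR by simp
    qed
    then have "c k = coeff P2 (m-1-k)" using coeffQ by simp
    also have "\<dots> = (\<Sum>\<mu>\<in>R. poly Q \<mu> * coeff (Lg \<mu>) (m-1-k))"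
      unfolding P2_def by (simp add: coeff_sum)
    finally show "c k = (\<Sum>\<mu>\<in>R. (\<Sum>j<m. \<mu>^(m-1-j) * c j) * (\<lambda>\<mu> k. coeff (Lg \<mu>) (m-1-k)) \<mu> k)"
      by (simp add: polyQ)
  qed
qed

lemma FG_row:
  assumes "i < m"
  shows "(\<Sum>j<m. FGmat b i j * x j) = - b (i+1) * x 0 + (if i+1 < m then x (i+1) else 0)"
proof -
  have "(\<Sum>j<m. FGmat b i j * x j) = (\<Sum>j<m. (if j = 0 then - b (i+1) * x j else 0)) + (\<Sum>j<m. if j = i+1 then x j else 0)"
    unfolding FGmat_def sum.distrib[symmetric] by (intro sum.cong) (auto simp: algebra_simps)
  also have "\<dots> = - b (i+1) * x 0 + (if i+1 < m then x (i+1) else 0)"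
    using assms by (simp add: sum.delta)
  finally show ?thesis .
qed

lemma eig:
  fixes \<mu> :: complex and x :: "nat \<Rightarrow> real"
  assumes p: "\<mu>^m + (\<Sum>j\<in>{1..m}. of_real (b j) * \<mu>^(m-j)) = 0"
  shows "(\<Sum>i<m. \<mu>^(m-1-i) * of_real (\<Sum>j<m. FGmat b i j * x j)) = \<mu> * (\<Sum>k<m. \<mu>^(m-1-k) * of_real (x k))"
proof (cases m)
  case 0 then show ?thesis by simp
next
  case (Suc n)
  have S: "(\<Sum>j\<in>{1..m}. of_real (b j) * \<mu>^(m-j)) = (\<Sum>i<Suc n. of_real (b (i+1)) * \<mu>^(n-i))"
  proof -
    have "{1..m} = Suc ` {..<Suc n}" using Suc by (simp add: image_Suc_lessThan)
    then show ?thesis using Suc by (simp add: sum.reindex)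
  qed
  have L: "(\<Sum>i<m. \<mu>^(m-1-i) * of_real (\<Sum>j<m. FGmat b i j * x j))
     = (\<Sum>i<Suc n. \<mu>^(n-i) * (- of_real (b (i+1)) * of_real (x 0))) + (\<Sum>i<Suc n. if i < n then \<mu>^(n-i) * of_real (x (i+1)) else 0)"
  proof -
    have row: "\<mu>^(m-1-i) * of_real (\<Sum>j<m. FGmat b i j * x j) = \<mu>^(n-i) * (- of_real (b (i+1)) * of_real (x 0)) + (if i < n then \<mu>^(n-i) * of_real (x (i+1)) else 0)"
      if i: "i < m" for i
      unfolding FG_row[OF i] using Suc by (simp add: algebra_simps)
    show ?thesis unfolding sum.distrib[symmetric] using Suc row by (intro sum.cong) auto
  qed
  also have "\<dots> = - of_real (x 0) * (\<Sum>i<Suc n. of_real (b (i+1)) * \<mu>^(n-i)) + (\<Sum>i<n. \<mu>^(n-i) * of_real (x (i+1)))"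
  proof -
    have "(\<Sum>i<Suc n. if i < n then \<mu>^(n-i) * of_real (x (i+1)) else 0) = (\<Sum>i<n. \<mu>^(n-i) * of_real (x (i+1)))"
      by (simp add: sum.lessThan_Suc)
    then show ?thesis by (simp add: sum_distrib_left algebra_simps)
  qed
  also have "\<dots> = \<mu>^(Suc n) * of_real (x 0) + (\<Sum>i<n. \<mu>^(n-i) * of_real (x (i+1)))"
  proof -
    have "(\<mu>^m) + (\<Sum>i<Suc n. of_real (b (i+1)) * \<mu>^(n-i)) = 0" using p unfolding S .
    then have p': "(\<Sum>i<Suc n. of_real (b (i+1)) * \<mu>^(n-i)) = - (\<mu>^m)"
      by (metis add.commute eq_neg_iff_add_eq_0)
    show ?thesis unfolding p' using Suc by (simp add: algebra_simps)
  qed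
  also have "\<dots> = \<mu> * (\<Sum>k<m. \<mu>^(m-1-k) * of_real (x k))"
  proof -
    have "(\<Sum>k<Suc n. \<mu>^(n-k) * of_real (x k)) = \<mu>^(n-0) * of_real (x 0) + (\<Sum>k<n. \<mu>^(n - Suc k) * of_real (x (Suc k)))"
      by (rule sum.lessThan_Suc_shift)
    moreover have "\<mu> * (\<Sum>k<n. \<mu>^(n - Suc k) * of_real (x (Suc k))) = (\<Sum>i<n. \<mu>^(n-i) * of_real (x (i+1)))"
      unfolding sum_distrib_left
      by (intro sum.cong refl) (simp add: Suc_diff_Suc power_Suc[symmetric] mult.assoc)
    ultimately show ?thesis using Suc by (simp add: algebra_simps)
  qed
  finally show ?thesis .
qed

lemma hurwitz_bound:
  fixes x v :: "real \<Rightarrow> nat \<Rightarrow> real" and b :: "nat \<Rightarrow> real"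
  assumes I: "fwd_interval I"
    and fin: "finite {\<mu>::complex. \<mu>^m + (\<Sum>j\<in>{1..m}. of_real (b j) * \<mu>^(m-j)) = 0}"
    and cardR: "card {\<mu>::complex. \<mu>^m + (\<Sum>j\<in>{1..m}. of_real (b j) * \<mu>^(m-j)) = 0} = m"
    and neg: "\<forall>\<mu>::complex. \<mu>^m + (\<Sum>j\<in>{1..m}. of_real (b j) * \<mu>^(m-j)) = 0 \<longrightarrow> Re \<mu> < 0"
    and der: "\<forall>t\<in>I. \<forall>i<m. ((\<lambda>t. x t i) has_real_derivative ((\<Sum>j<m. FGmat b i j * x t j) + v t i)) (at t within I)"
    and vb: "\<forall>t\<in>I. \<forall>i<m. \<bar>v t i\<bar> \<le> c"
  shows "\<exists>B. \<forall>t\<in>I. \<forall>i<m. \<bar>x t i\<bar> \<le> B"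
proof -
  define R where "R = {\<mu>::complex. \<mu>^m + (\<Sum>j\<in>{1..m}. of_real (b j) * \<mu>^(m-j)) = 0}"
  define y where "y \<mu> t = (\<Sum>k<m. \<mu>^(m-1-k) * of_real (x t k))" for \<mu> :: complex and t
  have I0: "0 \<in> I" using I by (auto simp: fwd_interval_def)
  have yb: "\<exists>B. \<forall>t\<in>I. cmod (y \<mu> t) \<le> B" if mu: "\<mu> \<in> R" for \<mu>
  proof -
    define \<alpha> where "\<alpha> = - Re \<mu>"
    have \<alpha>: "\<alpha> > 0" using neg mu unfolding R_def \<alpha>_def by auto
    define G where "G = (\<Sum>k<m. cmod \<mu> ^ (m-1-k) * c)"
    define g where "g t = (\<Sum>k<m. \<mu>^(m-1-k) * of_real (v t k))" for t
    have gb: "cmod (g t) \<le> G" if "t \<in> I" for t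
      unfolding g_def G_def
      by (rule order.trans[OF norm_sum], rule sum_mono)
         (use vb that in \<open>auto simp: norm_mult norm_power intro!: mult_left_mono\<close>)
    define xd where "xd t k = (\<Sum>j<m. FGmat b k j * x t j) + v t k" for t k
    have ReY: "Re (\<Sum>k<m. \<mu>^(m-1-k) * of_real (xd t k)) = Re (\<mu> * y \<mu> t + g t)"
         "Im (\<Sum>k<m. \<mu>^(m-1-k) * of_real (xd t k)) = Im (\<mu> * y \<mu> t + g t)" for t
    proof -
      have "(\<Sum>k<m. \<mu>^(m-1-k) * of_real (xd t k)) = (\<Sum>k<m. \<mu>^(m-1-k) * of_real (\<Sum>j<m. FGmat b k j * x t j)) + g t"
        unfolding xd_def g_def by (simp add: sum.distrib algebra_simps)
      also have "\<dots> = \<mu> * y \<mu> t + g t"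
        unfolding y_def using mu unfolding R_def by (subst eig) auto
      finally show "Re (\<Sum>k<m. \<mu>^(m-1-k) * of_real (xd t k)) = Re (\<mu> * y \<mu> t + g t)"
         "Im (\<Sum>k<m. \<mu>^(m-1-k) * of_real (xd t k)) = Im (\<mu> * y \<mu> t + g t)" by simp_all
    qed
    define u where "u t = (\<Sum>k<m. Re (\<mu>^(m-1-k)) * x t k)" for t
    define w where "w t = (\<Sum>k<m. Im (\<mu>^(m-1-k)) * x t k)" for t
    have uy: "u t = Re (y \<mu> t)" "w t = Im (y \<mu> t)" for t
      unfolding u_def w_def y_def by (simp_all add: Re_sum Im_sum)
    have du: "(u has_real_derivative Re (\<mu> * y \<mu> t + g t)) (at t within I)"
         and dw: "(w has_real_derivative Im (\<mu> * y \<mu> t + g t)) (at t within I)" if t: "t \<in> I" for t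
    proof -
      have dx: "((\<lambda>t. x t k) has_real_derivative xd t k) (at t within I)" if "k < m" for k
        using der t that unfolding xd_def by auto
      have "((\<lambda>t. \<Sum>k<m. Re (\<mu>^(m-1-k)) * x t k) has_real_derivative (\<Sum>k<m. Re (\<mu>^(m-1-k)) * xd t k)) (at t within I)"
        by (intro DERIV_sum DERIV_cmult dx) simp
      moreover have "(\<Sum>k<m. Re (\<mu>^(m-1-k)) * xd t k) = Re (\<mu> * y \<mu> t + g t)"
        using ReY(1)[of t] by (simp add: Re_sum)
      ultimately show "(u has_real_derivative Re (\<mu> * y \<mu> t + g t)) (at t within I)"
        unfolding u_def by simp
      have "((\<lambda>t. \<Sum>k<m. Im (\<mu>^(m-1-k)) * x t k) has_real_derivative (\<Sum>k<m. Im (\<mu>^(m-1-k)) * xd t k)) (at t within I)"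
        by (intro DERIV_sum DERIV_cmult dx) simp
      moreover have "(\<Sum>k<m. Im (\<mu>^(m-1-k)) * xd t k) = Im (\<mu> * y \<mu> t + g t)"
        using ReY(2)[of t] by (simp add: Im_sum)
      ultimately show "(w has_real_derivative Im (\<mu> * y \<mu> t + g t)) (at t within I)"
        unfolding w_def by simp
    qed
    define V where "V t = u t * u t + w t * w t" for t
    define V' where "V' t = 2 * (u t * Re (\<mu> * y \<mu> t + g t) + w t * Im (\<mu> * y \<mu> t + g t))" for t
    have dV: "(V has_real_derivative V' t) (at t within I)" if "t \<in> I" for t
      unfolding V_def V'_def
      using DERIV_add[OF DERIV_mult[OF du[OF that] du[OF that]] DERIV_mult[OF dw[OF that] dw[OF that]]]
      by (simp add: algebra_simps)
    have Vn: "V t = (cmod (y \<mu> t))^2" for t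
      unfolding V_def uy by (metis cmod_power2 power2_eq_square)
    have V'le: "V' t \<le> - \<alpha> * V t + G^2/\<alpha>" if t: "t \<in> I" for t
    proof -
      let ?y = "y \<mu> t"
      have e1: "V' t = 2 * (- \<alpha>) * V t + 2 * (Re ?y * Re (g t) + Im ?y * Im (g t))"
        unfolding V'_def V_def uy \<alpha>_def by (simp add: algebra_simps)
      have "Re ?y * Re (g t) + Im ?y * Im (g t) = Re (cnj ?y * g t)" by simp
      also have "\<dots> \<le> cmod (cnj ?y * g t)" by (rule complex_Re_le_cmod)
      also have "\<dots> \<le> cmod ?y * G" using gb[OF t] by (simp add: norm_mult mult_left_mono)
      finally have e2: "Re ?y * Re (g t) + Im ?y * Im (g t) \<le> cmod ?y * G" .
      have e3: "2 * (cmod ?y * G) \<le> \<alpha> * (cmod ?y)^2 + G^2/\<alpha>"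
      proof -
        have "0 \<le> (\<alpha> * cmod ?y - G)^2 / \<alpha>" using \<alpha> by simp
        also have "(\<alpha> * cmod ?y - G)^2 / \<alpha> = \<alpha> * (cmod ?y)^2 - 2 * (cmod ?y * G) + G^2/\<alpha>"
          using \<alpha> by (simp add: power2_eq_square field_simps)
        finally show ?thesis by simp
      qed
      show ?thesis using e1 e2 e3 Vn[of t] by simp
    qed
    have "\<forall>t\<in>I. V t \<le> max (V 0) ((G^2/\<alpha>)/\<alpha>)"
      by (rule lyap[OF I dV V'le \<alpha>])
    then have "\<forall>t\<in>I. cmod (y \<mu> t) \<le> 1 + max (V 0) ((G^2/\<alpha>)/\<alpha>)"
    proof (intro ballI)
      fix t assume "\<forall>t\<in>I. V t \<le> max (V 0) ((G^2/\<alpha>)/\<alpha>)" "t \<in> I"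
      then have h: "(cmod (y \<mu> t))^2 \<le> max (V 0) ((G^2/\<alpha>)/\<alpha>)" using Vn by metis
      show "cmod (y \<mu> t) \<le> 1 + max (V 0) ((G^2/\<alpha>)/\<alpha>)"
      proof (cases "cmod (y \<mu> t) \<le> 1")
        case True then show ?thesis using h by (smt (verit) zero_le_power2)
      next
        case False
        then have "cmod (y \<mu> t) * 1 \<le> cmod (y \<mu> t) * cmod (y \<mu> t)"
          by (intro mult_left_mono) auto
        then have "cmod (y \<mu> t) \<le> (cmod (y \<mu> t))^2" by (simp add: power2_eq_square)
        then show ?thesis using h by simp
      qed
    qed
    then show ?thesis by blast
  qed
  then obtain Bf where Bf: "\<And>\<mu> t. \<mu> \<in> R \<Longrightarrow> t \<in> I \<Longrightarrow> cmod (y \<mu> t) \<le> Bf \<mu>"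
    by metis
  obtain L where L: "\<forall>c::nat\<Rightarrow>complex. \<forall>k<m. c k = (\<Sum>\<mu>\<in>R. (\<Sum>j<m. \<mu>^(m-1-j) * c j) * L \<mu> k)"
    using lagrange_coeffs[OF fin[folded R_def] cardR[folded R_def]] by blast
  define B where "B = (\<Sum>k<m. \<Sum>\<mu>\<in>R. \<bar>Bf \<mu>\<bar> * cmod (L \<mu> k))"
  show ?thesis
  proof (intro exI ballI allI impI)
    fix t i assume t: "t \<in> I" and i: "i < m"
    have "of_real (x t i) = (\<Sum>\<mu>\<in>R. y \<mu> t * L \<mu> i)"
      using L[rule_format, of i "\<lambda>j. of_real (x t j)"] i unfolding y_def by simp
    then have "\<bar>x t i\<bar> = cmod (\<Sum>\<mu>\<in>R. y \<mu> t * L \<mu> i)" by (metis norm_of_real)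
    also have "\<dots> \<le> (\<Sum>\<mu>\<in>R. \<bar>Bf \<mu>\<bar> * cmod (L \<mu> i))"
      by (rule order.trans[OF norm_sum], rule sum_mono)
         (use Bf t in \<open>auto simp: norm_mult intro!: mult_right_mono intro: order.trans[OF _ abs_ge_self]\<close>)
    also have "\<dots> \<le> B" unfolding B_def
      using i by (intro member_le_sum) (auto intro!: sum_nonneg)
    finally show "\<bar>x t i\<bar> \<le> B" .
  qed
qed




lemma vec_comp_deriv:
  fixes f :: "real \<Rightarrow> real^'q"
  assumes "(f has_vector_derivative f') F"
  shows "((\<lambda>t. f t $ k) has_real_derivative f' $ k) F"
proof -
  have "(f has_derivative (\<lambda>h. h *\<^sub>R f')) F" using assms by (simp add: has_vector_derivative_def)
  from bounded_linear.has_derivative[OF bounded_linear_vec_nth[of k] this]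
  have "((\<lambda>t. f t $ k) has_derivative (\<lambda>h. h * f' $ k)) F" by simp
  then show ?thesis unfolding has_field_derivative_def
    by (rule has_derivative_eq_rhs) (auto simp: mult.commute)
qed

lemma inner_self_deriv:
  fixes f :: "real \<Rightarrow> 'a::real_inner"
  assumes "(f has_vector_derivative f') (at t within S)"
  shows "((\<lambda>t. f t \<bullet> f t) has_real_derivative 2 * (f t \<bullet> f')) (at t within S)"
proof -
  have d: "(f has_derivative (\<lambda>h. h *\<^sub>R f')) (at t within S)" using assms by (simp add: has_vector_derivative_def)
  have "((\<lambda>t. f t \<bullet> f t) has_derivative (\<lambda>h. f t \<bullet> (h *\<^sub>R f') + (h *\<^sub>R f') \<bullet> f t)) (at t within S)"
    by (rule has_derivative_inner[OF d d])
  then show ?thesis unfolding has_field_derivative_def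
    by (rule has_derivative_eq_rhs) (auto simp: inner_commute algebra_simps)
qed

lemma C1_cont:
  assumes "C1_on S f" shows "continuous_on S f"
proof -
  obtain f' where f': "\<forall>x\<in>S. (f has_derivative blinfun_apply (f' x)) (at x)"
    using assms unfolding C1_on_def by blast
  show ?thesis
  proof (rule continuous_at_imp_continuous_on, rule ballI)
    fix x assume "x \<in> S"
    then show "isCont f x" using f' has_derivative_continuous by blast
  qed
qed

lemma cont_bound:
  fixes f :: "'a::metric_space \<Rightarrow> 'b::real_normed_vector"
  assumes "compact K" "continuous_on K f"
  shows "\<exists>M. \<forall>x\<in>K. norm (f x) \<le> M"
  using compact_imp_bounded[OF compact_continuous_image[OF assms(2,1)]]
  by (auto simp: bounded_iff)

lemma supp_bound:
  fixes f :: "real \<Rightarrow> 'b::real_normed_vector"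
  assumes "continuous_on UNIV f" "\<forall>x. \<bar>x\<bar> > R \<longrightarrow> f x = 0"
  shows "\<exists>M. \<forall>x. norm (f x) \<le> M"
proof -
  have "continuous_on (cball 0 R) f" by (rule continuous_on_subset[OF assms(1)]) simp
  then obtain M where M: "\<forall>x\<in>cball 0 R. norm (f x) \<le> M"
    using cont_bound[OF compact_cball] by blast
  have "norm (f x) \<le> max M 0" for x
  proof (cases "\<bar>x\<bar> > R")
    case True then show ?thesis using assms(2) by simp
  next
    case False
    then have "x \<in> cball 0 R" by (simp add: dist_real_def)
    then have "norm (f x) \<le> M" using M by blast
    then show ?thesis by linarith
  qed
  then show ?thesis by blast
qed

lemma fin_bound:
  fixes P :: "'a \<Rightarrow> nat \<Rightarrow> real"
  assumes "\<forall>i<d. \<exists>M. \<forall>a\<in>S. P a i \<le> M"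
  shows "\<exists>M. \<forall>a\<in>S. \<forall>i<d. P a i \<le> M"
proof -
  from assms obtain Mf where Mf: "\<forall>i<d. \<forall>a\<in>S. P a i \<le> Mf i" by metis
  have "P a i \<le> (\<Sum>j<d. \<bar>Mf j\<bar>)" if "a \<in> S" "i < d" for a i
  proof -
    have "P a i \<le> Mf i" using Mf that by blast
    then have "P a i \<le> \<bar>Mf i\<bar>" using abs_ge_self[of "Mf i"] by linarith
    also have "\<dots> \<le> (\<Sum>j<d. \<bar>Mf j\<bar>)" using that by (intro member_le_sum) auto
    finally show ?thesis .
  qed
  then show ?thesis by blast
qed

lemma fin_bound_q:
  fixes P :: "'a \<Rightarrow> 'q::finite \<Rightarrow> real"
  assumes "\<forall>k. \<exists>M. \<forall>a\<in>S. P a k \<le> M"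
  shows "\<exists>M. \<forall>a\<in>S. (\<Sum>k\<in>UNIV. P a k) \<le> M"
proof -
  from assms obtain Mf where Mf: "\<forall>k. \<forall>a\<in>S. P a k \<le> Mf k" by metis
  have "(\<Sum>k\<in>UNIV. P a k) \<le> (\<Sum>k\<in>UNIV. Mf k)" if "a \<in> S" for a
    using Mf that by (intro sum_mono) auto
  then show ?thesis by blast
qed

lemma scalar_dz:
  fixes a c ell Md :: real
  assumes c: "\<bar>c\<bar> < ell" and Md: "\<forall>y. \<bar>y\<bar> \<le> ell + 1 \<longrightarrow> \<bar>dz y\<bar> \<le> Md"
    and id: "\<forall>y. \<bar>y\<bar> \<ge> ell + 1 \<longrightarrow> dz y = y"
  shows "- 2 * (a * dz (a + c)) \<le> - (a * a) + (ell^2 + 2 * (2*ell+1) * Md + (2*ell+1)^2)"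
proof -
  have ell0: "ell > 0" using c by linarith
  have "\<bar>dz 0\<bar> \<le> Md" using Md ell0 by simp
  then have Md0: "Md \<ge> 0" using abs_ge_zero[of "dz 0"] by linarith
  show ?thesis
  proof (cases "\<bar>a + c\<bar> \<ge> ell + 1")
    case True
    then have dzeq: "dz (a + c) = a + c" using id by auto
    have "c * c \<le> ell^2"
    proof -
      have "\<bar>c\<bar> * \<bar>c\<bar> \<le> ell * ell" using c by (intro mult_mono) auto
      then show ?thesis by (simp add: power2_eq_square)
    qed
    moreover have "0 \<le> (a + c) * (a + c)" by simp
    moreover have e: "- 2 * (a * (a + c)) = - (a*a) + c*c - (a+c)*(a+c)" by (simp add: algebra_simps)
    moreover have "0 \<le> 2*(2*ell+1)*Md" using Md0 ell0 by simp
    moreover have "0 \<le> (2*ell+1)^2" by simp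
    ultimately show ?thesis unfolding dzeq by linarith
  next
    case False
    then have "\<bar>a + c\<bar> \<le> ell + 1" by simp
    then have h: "\<bar>dz (a + c)\<bar> \<le> Md" using Md by blast
    have ha: "\<bar>a\<bar> \<le> 2*ell+1" using False c by linarith
    have "- 2 * (a * dz (a + c)) \<le> 2 * (\<bar>a\<bar> * \<bar>dz (a + c)\<bar>)"
      using abs_ge_minus_self[of "a * dz (a + c)"] abs_mult[of a "dz (a + c)"] by linarith
    also have "\<dots> \<le> 2 * ((2*ell+1) * Md)" using ha h Md0 by (intro mult_left_mono mult_mono) simp_all
    finally have 1: "- 2 * (a * dz (a + c)) \<le> 2 * ((2*ell+1) * Md)" .
    have "2 * ((2*ell+1) * Md) = 2 * (2*ell+1) * Md" by (rule mult.assoc[symmetric])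
    have "\<bar>a\<bar> * \<bar>a\<bar> \<le> (2*ell+1) * (2*ell+1)" using ha by (intro mult_mono) simp_all
    then have "a * a \<le> (2*ell+1)^2" by (simp add: power2_eq_square)
    moreover have "0 \<le> ell^2" by simp
    ultimately show ?thesis using 1 \<open>2 * ((2*ell+1) * Md) = 2 * (2*ell+1) * Md\<close> by linarith
  qed
qed



theorem lemma1:
  fixes s :: "'p::euclidean_space \<times> 'w::euclidean_space \<Rightarrow> 'w"
    and f0 :: "'p \<times> 'w \<times> 'z::euclidean_space \<Rightarrow> 'z"
    and qf :: "('p \<times> 'w \<times> 'z) \<times> real \<Rightarrow> real"
    and P :: "'p set" and W :: "'w set" and Z :: "'z set"
    and ZZ :: "('p \<times> 'w \<times> 'z) set"
    and d :: nat
    and \<tau> :: "nat \<Rightarrow> 'p \<times> 'w \<times> 'z \<Rightarrow> real"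
    and \<theta> :: "'p \<Rightarrow> real^'q"
    and \<phi> :: "real \<Rightarrow> nat \<Rightarrow> real"
    and \<Omega> :: "real \<Rightarrow> nat \<Rightarrow> real^'q"
    and b :: "nat \<Rightarrow> real"
    and ell :: real
    and dz :: "real \<Rightarrow> real"
  assumes "compact P" and "compact W" and "compact Z"
    and "C1_on UNIV s" and "C1_on UNIV f0" and "C1_on UNIV qf"
    \<comment> \<open>Assumption (i)\<close>
    and "submanifold_wb (P \<times> W)"
    and "invariant_set (\<lambda>(\<rho>, w). ((0::'p), s (\<rho>, w))) (P \<times> W)"
    \<comment> \<open>Assumption (ii)\<close>
    and "compact ZZ" and "ZZ \<subseteq> P \<times> W \<times> UNIV"
    and "\<forall>I x. fwd_interval I \<and> ode_sol (fbold s f0) I x \<and> x 0 \<in> P \<times> W \<times> Z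
               \<longrightarrow> (\<forall>t\<in>I. x t \<in> ZZ)"
    and "submanifold_wb (omega_limit (fbold s f0) (P \<times> W \<times> Z))"
    and "\<exists>d1>0. \<forall>zz \<in> P \<times> W \<times> UNIV.
            (\<exists>a\<in>omega_limit (fbold s f0) (P \<times> W \<times> Z). dist zz a \<le> d1) \<longrightarrow> zz \<in> P \<times> W \<times> Z"
    \<comment> \<open>Assumption (iv)\<close>
    and "d \<ge> 1"
    and "\<exists>U. open U \<and> ZZ \<subseteq> U \<and> (\<forall>i<d. C1_on U (\<tau> i))"
    and "continuous_on P \<theta>"
    and "\<forall>i<d. C1_on UNIV (\<lambda>x. \<phi> x i)" and "\<forall>i<d. C1_on UNIV (\<lambda>x. \<Omega> x i)"
    and "\<exists>R. \<forall>x. \<bar>x\<bar> > R \<longrightarrow> (\<forall>i<d. \<phi> x i = 0 \<and> \<Omega> x i = 0)"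
    and "\<forall>zz\<in>omega_limit (fbold s f0) (P \<times> W \<times> Z).
           (\<forall>i<d. frechet_derivative (\<tau> i) (at zz) (fbold s f0 zz)
                   = shiftA d (\<lambda>j. \<tau> j zz) i + \<phi> (\<tau> 0 zz) i + \<Omega> (\<tau> 0 zz) i \<bullet> \<theta> (fst zz))
           \<and> - qf (zz, 0) = \<tau> 0 zz"
    \<comment> \<open>design quantities\<close>
    and "b 0 = 1"
    and "finite {x::complex. x ^ (d - 1) + (\<Sum>j\<in>{1..<d}. complex_of_real (b j) * x ^ (d - 1 - j)) = 0}"
    and "card {x::complex. x ^ (d - 1) + (\<Sum>j\<in>{1..<d}. complex_of_real (b j) * x ^ (d - 1 - j)) = 0} = d - 1"
    and "\<forall>x::complex. x ^ (d - 1) + (\<Sum>j\<in>{1..<d}. complex_of_real (b j) * x ^ (d - 1 - j)) = 0 \<longrightarrow> Re x < 0"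
    and "\<forall>\<rho>\<in>P. norm (\<theta> \<rho>) < ell"
    and "C1_on UNIV dz" and "\<forall>x. \<bar>x\<bar> \<le> ell \<longrightarrow> dz x = 0" and "\<forall>x. \<bar>x\<bar> \<ge> ell + 1 \<longrightarrow> dz x = x"
  shows "\<exists>lam_star. \<forall>lam\<ge>lam_star. \<forall>I zz chi th X.
     fwd_interval I \<and> zz 0 \<in> P \<times> W \<times> Z \<and> ode_sol (fbold s f0) I zz
     \<and> (\<forall>t\<in>I. \<forall>i<d. ((\<lambda>t. chi t i) has_real_derivative
           (shiftA d (chi t) i - Kvec d b lam i * chi t 0
            + b i * (betav d (X t) \<Omega> (chi t 0 + \<tau> 0 (zz t)) \<bullet> th t)
            + (\<phi> (chi t 0 + \<tau> 0 (zz t)) i - \<phi> (chi t 0) i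
               + (\<Omega> (chi t 0 + \<tau> 0 (zz t)) i - \<Omega> (chi t 0) i) \<bullet> \<theta> (fst (zz t)))
            + (Kvec d b lam i * (- qf (zz t, 0) - \<tau> 0 (zz t)) + shiftA d (\<lambda>j. \<tau> j (zz t)) i
               + \<phi> (\<tau> 0 (zz t)) i + \<Omega> (\<tau> 0 (zz t)) i \<bullet> \<theta> (fst (zz t))
               - frechet_derivative (\<tau> i) (at (zz t)) (fbold s f0 (zz t)))))
          (at t within I))
     \<and> (\<forall>t\<in>I. (th has_vector_derivative
           (- (chi t 0 *\<^sub>R betav d (X t) \<Omega> (chi t 0 + \<tau> 0 (zz t)))
            - dzv dz (th t + \<theta> (fst (zz t))))) (at t within I))
     \<and> (\<forall>t\<in>I. \<forall>i<d - 1. ((\<lambda>t. X t i) has_vector_derivative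
           ((\<Sum>j<d - 1. FGmat b i j *\<^sub>R X t j)
            + (\<Sum>j<d. FGmat b i j *\<^sub>R \<Omega> (chi t 0 + \<tau> 0 (zz t)) j))) (at t within I))
     \<longrightarrow> (\<exists>B. \<forall>t\<in>I. norm (zz t) \<le> B \<and> (\<forall>i<d. \<bar>chi t i\<bar> \<le> B) \<and> norm (th t) \<le> B
                   \<and> (\<forall>i<d - 1. norm (X t i) \<le> B))"
proof -
  have d1: "d \<ge> 1" using assms(14) .
  obtain U where U: "open U" "ZZ \<subseteq> U" "\<forall>i<d. C1_on U (\<tau> i)" using assms(15) by blast
  obtain Rs where Rs: "\<forall>x. \<bar>x\<bar> > Rs \<longrightarrow> (\<forall>i<d. \<phi> x i = 0 \<and> \<Omega> x i = 0)" using assms(19) by blast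
  have "\<forall>i<d. \<exists>M. \<forall>a\<in>UNIV. \<bar>\<phi> a i\<bar> \<le> M"
  proof (intro allI impI)
    fix i assume i: "i < d"
    have "\<exists>M. \<forall>x. norm (\<phi> x i) \<le> M"
      by (rule supp_bound[of _ Rs]) (use C1_cont assms(17) Rs i in auto)
    then show "\<exists>M. \<forall>a\<in>UNIV. \<bar>\<phi> a i\<bar> \<le> M" by simp
  qed
  from fin_bound[OF this] obtain M\<phi> where M\<phi>: "\<And>a i. i < d \<Longrightarrow> \<bar>\<phi> a i\<bar> \<le> M\<phi>" by blast
  have "\<forall>i<d. \<exists>M. \<forall>a\<in>UNIV. norm (\<Omega> a i) \<le> M"
  proof (intro allI impI)
    fix i assume i: "i < d"
    show "\<exists>M. \<forall>a\<in>UNIV. norm (\<Omega> a i) \<le> M"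
      using supp_bound[of "\<lambda>x. \<Omega> x i" Rs] C1_cont assms(18) Rs i by auto
  qed
  from fin_bound[OF this] obtain M\<Omega> where M\<Omega>: "\<And>a i. i < d \<Longrightarrow> norm (\<Omega> a i) \<le> M\<Omega>" by blast
  have "\<exists>M. \<forall>y\<in>cball 0 (ell+1). norm (dz y) \<le> M"
    by (rule cont_bound) (use C1_cont[OF assms(26)] continuous_on_subset in auto)
  then obtain Md where "\<forall>y\<in>cball 0 (ell+1). \<bar>dz y\<bar> \<le> Md" by auto
  then have Md: "\<forall>y. \<bar>y\<bar> \<le> ell + 1 \<longrightarrow> \<bar>dz y\<bar> \<le> Md" by (auto simp: mem_cball dist_real_def)
  have "\<exists>M. \<forall>z\<in>ZZ. norm (qf (z, 0)) \<le> M"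
  proof (rule cont_bound[OF assms(9)])
    show "continuous_on ZZ (\<lambda>z. qf (z, 0))"
      by (rule continuous_on_compose2[OF C1_cont[OF assms(6)]]) (auto intro!: continuous_intros)
  qed
  then obtain Mq where Mq: "\<And>z. z \<in> ZZ \<Longrightarrow> \<bar>qf (z, 0)\<bar> \<le> Mq" by auto
  have "\<forall>j<d. \<exists>M. \<forall>z\<in>ZZ. \<bar>\<tau> j z\<bar> \<le> M"
  proof (intro allI impI)
    fix j assume j: "j < d"
    have "continuous_on ZZ (\<tau> j)" using C1_cont U j continuous_on_subset by blast
    then show "\<exists>M. \<forall>z\<in>ZZ. \<bar>\<tau> j z\<bar> \<le> M" using cont_bound[OF assms(9)] by fastforce
  qed
  from fin_bound[OF this] obtain M\<tau> where M\<tau>: "\<And>z j. z \<in> ZZ \<Longrightarrow> j < d \<Longrightarrow> \<bar>\<tau> j z\<bar> \<le> M\<tau>" by blast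
  have fbold_eq: "fbold s f0 = (\<lambda>z. (0, s (fst z, fst (snd z)), f0 z))"
    by (auto simp: fbold_def fun_eq_iff split: prod.split)
  have fbc: "continuous_on ZZ (fbold s f0)"
    unfolding fbold_eq
    by (intro continuous_intros continuous_on_compose2[OF C1_cont[OF assms(4)]]
        continuous_on_compose2[OF C1_cont[OF assms(5)]]) auto
  obtain Mfb where Mfb: "\<And>z. z \<in> ZZ \<Longrightarrow> norm (fbold s f0 z) \<le> Mfb"
    using cont_bound[OF assms(9) fbc] by blast
  have "\<forall>i<d. \<exists>M. \<forall>z\<in>ZZ. \<bar>frechet_derivative (\<tau> i) (at z) (fbold s f0 z)\<bar> \<le> M"
  proof (intro allI impI)
    fix i assume i: "i < d"
    obtain f' where f': "\<forall>x\<in>U. (\<tau> i has_derivative blinfun_apply (f' x)) (at x)" "continuous_on U f'"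
      using U(3) i unfolding C1_on_def by blast
    obtain Mf where Mf: "\<And>z. z \<in> ZZ \<Longrightarrow> norm (f' z) \<le> Mf"
      using cont_bound[OF assms(9) continuous_on_subset[OF f'(2) U(2)]] by blast
    have "\<bar>frechet_derivative (\<tau> i) (at z) (fbold s f0 z)\<bar> \<le> Mf * Mfb" if z: "z \<in> ZZ" for z
    proof -
      have "frechet_derivative (\<tau> i) (at z) = blinfun_apply (f' z)"
        using f'(1) U(2) z frechet_derivative_at by (metis subsetD)
      then have "\<bar>frechet_derivative (\<tau> i) (at z) (fbold s f0 z)\<bar> = norm (blinfun_apply (f' z) (fbold s f0 z))" by simp
      also have "\<dots> \<le> norm (f' z) * norm (fbold s f0 z)" by (rule norm_blinfun)
      also have "\<dots> \<le> Mf * Mfb" using Mf[OF z] Mfb[OF z] order.trans[OF norm_ge_zero Mf[OF z]] by (intro mult_mono) auto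
      finally show ?thesis .
    qed
    then show "\<exists>M. \<forall>z\<in>ZZ. \<bar>frechet_derivative (\<tau> i) (at z) (fbold s f0 z)\<bar> \<le> M" by blast
  qed
  from fin_bound[OF this] obtain Mfd where Mfd: "\<And>z i. z \<in> ZZ \<Longrightarrow> i < d \<Longrightarrow> \<bar>frechet_derivative (\<tau> i) (at z) (fbold s f0 z)\<bar> \<le> Mfd" by blast
  obtain Bz where Bz: "\<And>z. z \<in> ZZ \<Longrightarrow> norm z \<le> Bz"
    using compact_imp_bounded[OF assms(9)] by (auto simp: bounded_iff)
  define Sb where "Sb = (\<Sum>j<d. \<bar>b j\<bar>)"
  have Sb: "\<bar>b j\<bar> \<le> Sb" if "j < d" for j unfolding Sb_def using that by (intro member_le_sum) auto
  have Sb0: "Sb \<ge> 0" unfolding Sb_def by (rule sum_nonneg) simp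
  have \<Omega>\<theta>: "\<bar>\<Omega> a i \<bullet> \<theta> \<rho>\<bar> \<le> M\<Omega> * ell" if "i < d" "\<rho> \<in> P" for a i \<rho>
  proof -
    have "\<bar>\<Omega> a i \<bullet> \<theta> \<rho>\<bar> \<le> norm (\<Omega> a i) * norm (\<theta> \<rho>)" by (rule Cauchy_Schwarz_ineq2)
    also have "\<dots> \<le> M\<Omega> * ell" using M\<Omega>[OF that(1)] assms(25) that(2) order.trans[OF norm_ge_zero M\<Omega>[OF that(1)]]
      by (intro mult_mono) auto
    finally show ?thesis .
  qed
  show ?thesis
  proof (rule exI[of _ 1], intro allI impI)
    fix lam :: real and I zz chi th X
    assume lam: "lam \<ge> 1"
    assume H: "fwd_interval I \<and> zz 0 \<in> P \<times> W \<times> Z \<and> ode_sol (fbold s f0) I zz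
     \<and> (\<forall>t\<in>I. \<forall>i<d. ((\<lambda>t. chi t i) has_real_derivative
           (shiftA d (chi t) i - Kvec d b lam i * chi t 0
            + b i * (betav d (X t) \<Omega> (chi t 0 + \<tau> 0 (zz t)) \<bullet> th t)
            + (\<phi> (chi t 0 + \<tau> 0 (zz t)) i - \<phi> (chi t 0) i
               + (\<Omega> (chi t 0 + \<tau> 0 (zz t)) i - \<Omega> (chi t 0) i) \<bullet> \<theta> (fst (zz t)))
            + (Kvec d b lam i * (- qf (zz t, 0) - \<tau> 0 (zz t)) + shiftA d (\<lambda>j. \<tau> j (zz t)) i
               + \<phi> (\<tau> 0 (zz t)) i + \<Omega> (\<tau> 0 (zz t)) i \<bullet> \<theta> (fst (zz t))
               - frechet_derivative (\<tau> i) (at (zz t)) (fbold s f0 (zz t)))))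
          (at t within I))
     \<and> (\<forall>t\<in>I. (th has_vector_derivative
           (- (chi t 0 *\<^sub>R betav d (X t) \<Omega> (chi t 0 + \<tau> 0 (zz t)))
            - dzv dz (th t + \<theta> (fst (zz t))))) (at t within I))
     \<and> (\<forall>t\<in>I. \<forall>i<d - 1. ((\<lambda>t. X t i) has_vector_derivative
           ((\<Sum>j<d - 1. FGmat b i j *\<^sub>R X t j)
            + (\<Sum>j<d. FGmat b i j *\<^sub>R \<Omega> (chi t 0 + \<tau> 0 (zz t)) j))) (at t within I))"
    then have I: "fwd_interval I" and z0: "zz 0 \<in> P \<times> W \<times> Z" and zsol: "ode_sol (fbold s f0) I zz"
      by auto
    have zZ: "zz t \<in> ZZ" if "t \<in> I" for t using assms(11)[rule_format, of I zz t] I z0 zsol that by simp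
    have zP: "fst (zz t) \<in> P" if "t \<in> I" for t using zZ[OF that] assms(10) by auto
    define u where "u t = betav d (X t) \<Omega> (chi t 0 + \<tau> 0 (zz t)) \<bullet> th t" for t
    define w where "w t i = (\<phi> (chi t 0 + \<tau> 0 (zz t)) i - \<phi> (chi t 0) i
               + (\<Omega> (chi t 0 + \<tau> 0 (zz t)) i - \<Omega> (chi t 0) i) \<bullet> \<theta> (fst (zz t)))
            + (Kvec d b lam i * (- qf (zz t, 0) - \<tau> 0 (zz t)) + shiftA d (\<lambda>j. \<tau> j (zz t)) i
               + \<phi> (\<tau> 0 (zz t)) i + \<Omega> (\<tau> 0 (zz t)) i \<bullet> \<theta> (fst (zz t))
               - frechet_derivative (\<tau> i) (at (zz t)) (fbold s f0 (zz t)))" for t i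
    have dchi: "((\<lambda>t. chi t i) has_real_derivative (shiftA d (chi t) i - Kvec d b lam i * chi t 0 + b i * u t + w t i)) (at t within I)"
      if "t \<in> I" "i < d" for t i
      using H that unfolding u_def w_def by (simp add: add.assoc)
    have "\<forall>i<d. \<exists>M. \<forall>t\<in>I. \<bar>w t i\<bar> \<le> M"
    proof (intro allI impI)
      fix i assume i: "i < d"
      have "\<bar>w t i\<bar> \<le> 3 * M\<phi> + 3 * (M\<Omega> * ell) + \<bar>Kvec d b lam i\<bar> * (Mq + M\<tau>) + M\<tau> + Mfd" if t: "t \<in> I" for t
      proof -
        let ?z = "zz t" and ?\<rho> = "fst (zz t)"
        have z: "?z \<in> ZZ" and \<rho>: "?\<rho> \<in> P" using zZ zP t by auto
        have Mt0: "M\<tau> \<ge> 0" using M\<tau>[OF z, of 0] d1 by linarith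
        have a1: "\<bar>\<phi> (chi t 0 + \<tau> 0 ?z) i\<bar> \<le> M\<phi>" "\<bar>\<phi> (chi t 0) i\<bar> \<le> M\<phi>" "\<bar>\<phi> (\<tau> 0 ?z) i\<bar> \<le> M\<phi>"
          using M\<phi> i by auto
        have a2: "\<bar>\<Omega> (chi t 0 + \<tau> 0 ?z) i \<bullet> \<theta> ?\<rho>\<bar> \<le> M\<Omega> * ell" "\<bar>\<Omega> (chi t 0) i \<bullet> \<theta> ?\<rho>\<bar> \<le> M\<Omega> * ell"
             "\<bar>\<Omega> (\<tau> 0 ?z) i \<bullet> \<theta> ?\<rho>\<bar> \<le> M\<Omega> * ell"
          using \<Omega>\<theta> i \<rho> by auto
        have a3: "\<bar>Kvec d b lam i * (- qf (?z, 0) - \<tau> 0 ?z)\<bar> \<le> \<bar>Kvec d b lam i\<bar> * (Mq + M\<tau>)"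
        proof -
          have "\<bar>- qf (?z, 0) - \<tau> 0 ?z\<bar> \<le> Mq + M\<tau>" using Mq[OF z] M\<tau>[OF z, of 0] d1 by linarith
          then show ?thesis unfolding abs_mult by (intro mult_left_mono) auto
        qed
        have a4: "\<bar>shiftA d (\<lambda>j. \<tau> j ?z) i\<bar> \<le> M\<tau>" using M\<tau>[OF z] Mt0 by (simp add: shiftA_def)
        have a5: "\<bar>frechet_derivative (\<tau> i) (at ?z) (fbold s f0 ?z)\<bar> \<le> Mfd" using Mfd[OF z i] .
        have e: "w t i = \<phi> (chi t 0 + \<tau> 0 ?z) i - \<phi> (chi t 0) i + (\<Omega> (chi t 0 + \<tau> 0 ?z) i \<bullet> \<theta> ?\<rho> - \<Omega> (chi t 0) i \<bullet> \<theta> ?\<rho>)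
           + (Kvec d b lam i * (- qf (?z, 0) - \<tau> 0 ?z) + shiftA d (\<lambda>j. \<tau> j ?z) i + \<phi> (\<tau> 0 ?z) i + \<Omega> (\<tau> 0 ?z) i \<bullet> \<theta> ?\<rho>
           - frechet_derivative (\<tau> i) (at ?z) (fbold s f0 ?z))"
          unfolding w_def by (simp add: inner_diff_left)
        show ?thesis unfolding e using a1 a2 a3 a4 a5 by (simp only: abs_le_iff) linarith
      qed
      then show "\<exists>M. \<forall>t\<in>I. \<bar>w t i\<bar> \<le> M" by blast
    qed
    from fin_bound[OF this] obtain Wb where Wb: "\<And>t i. t \<in> I \<Longrightarrow> i < d \<Longrightarrow> \<bar>w t i\<bar> \<le> Wb" by blast
    have Wb0: "Wb \<ge> 0" if "t \<in> I" for t using Wb[OF that, of 0] d1 by linarith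
    have setq: "{1..<d} = {1..d-1}" using d1 by auto
    have finR: "finite {\<mu>::complex. \<mu>^(d-1) + (\<Sum>j\<in>{1..d-1}. of_real (b j) * \<mu>^(d-1-j)) = 0}"
      using assms(22) unfolding setq .
    have cardR: "card {\<mu>::complex. \<mu>^(d-1) + (\<Sum>j\<in>{1..d-1}. of_real (b j) * \<mu>^(d-1-j)) = 0} = d - 1"
      using assms(23) unfolding setq .
    have negR: "\<forall>\<mu>::complex. \<mu>^(d-1) + (\<Sum>j\<in>{1..d-1}. of_real (b j) * \<mu>^(d-1-j)) = 0 \<longrightarrow> Re \<mu> < 0"
      using assms(24) unfolding setq .
    define \<zeta> where "\<zeta> t i = chi t (i+1) - b (i+1) * chi t 0" for t i
    define v where "v t i = w t (i+1) - b (i+1) * w t 0" for t i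
    have d\<zeta>: "\<forall>t\<in>I. \<forall>i<d-1. ((\<lambda>t. \<zeta> t i) has_real_derivative ((\<Sum>j<d-1. FGmat b i j * \<zeta> t j) + v t i)) (at t within I)"
    proof (intro ballI allI impI)
      fix t i assume t: "t \<in> I" and i: "i < d-1"
      have d2: "Suc 0 < d" using i by linarith
      have iff: "(Suc i < d - Suc 0) = (Suc (Suc i) < d)" by arith
      have D: "((\<lambda>t. \<zeta> t i) has_real_derivative (shiftA d (chi t) (i+1) - Kvec d b lam (i+1) * chi t 0 + b (i+1) * u t + w t (i+1))
           - b (i+1) * (shiftA d (chi t) 0 - Kvec d b lam 0 * chi t 0 + b 0 * u t + w t 0)) (at t within I)"
        unfolding \<zeta>_def using i t by (intro DERIV_diff DERIV_cmult dchi) auto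
      have "(shiftA d (chi t) (i+1) - Kvec d b lam (i+1) * chi t 0 + b (i+1) * u t + w t (i+1))
           - b (i+1) * (shiftA d (chi t) 0 - Kvec d b lam 0 * chi t 0 + b 0 * u t + w t 0)
          = (\<Sum>j<d-1. FGmat b i j * \<zeta> t j) + v t i"
        unfolding FG_row[OF i, of b "\<zeta> t"] using i assms(21) d2 iff
        by (cases "i+2<d") (simp_all add: \<zeta>_def v_def shiftA_def Kvec_def algebra_simps)
      then show "((\<lambda>t. \<zeta> t i) has_real_derivative ((\<Sum>j<d-1. FGmat b i j * \<zeta> t j) + v t i)) (at t within I)"
        using D by simp
    qed
    have vb: "\<forall>t\<in>I. \<forall>i<d-1. \<bar>v t i\<bar> \<le> Wb + Sb * Wb"
    proof (intro ballI allI impI)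
      fix t i assume t: "t \<in> I" and i: "i < d-1"
      have "\<bar>b (i+1) * w t 0\<bar> \<le> Sb * Wb" unfolding abs_mult
        using Sb[of "i+1"] Wb[OF t, of 0] i d1 Sb0 by (intro mult_mono) auto
      then show "\<bar>v t i\<bar> \<le> Wb + Sb * Wb" unfolding v_def using Wb[OF t, of "i+1"] i by linarith
    qed
    obtain B\<zeta> where B\<zeta>: "\<And>t i. t \<in> I \<Longrightarrow> i < d-1 \<Longrightarrow> \<bar>\<zeta> t i\<bar> \<le> B\<zeta>"
      using hurwitz_bound[OF I finR cardR negR d\<zeta> vb] by blast
    have FGb: "\<bar>FGmat b i j\<bar> \<le> Sb + 1" if i: "i < d - 1" for i j
    proof -
      have "\<bar>FGmat b i j\<bar> \<le> \<bar>b (i+1)\<bar> + 1" unfolding FGmat_def by (auto simp: abs_if)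
      then show ?thesis using Sb[of "i+1"] i by linarith
    qed
    have M\<Omega>0: "M\<Omega> \<ge> 0" using M\<Omega>[of 0 0] d1 norm_ge_zero[of "\<Omega> 0 0"] by linarith
    have "\<forall>k. \<exists>B. \<forall>t\<in>I. \<forall>i<d-1. \<bar>X t i $ k\<bar> \<le> B"
    proof
      fix k
      define xk where "xk t i = X t i $ k" for t i
      define vk where "vk t i = (\<Sum>j<d. FGmat b i j *\<^sub>R \<Omega> (chi t 0 + \<tau> 0 (zz t)) j) $ k" for t i
      have dxk: "\<forall>t\<in>I. \<forall>i<d-1. ((\<lambda>t. xk t i) has_real_derivative ((\<Sum>j<d-1. FGmat b i j * xk t j) + vk t i)) (at t within I)"
      proof (intro ballI allI impI)
        fix t i assume t: "t \<in> I" and i: "i < d-1"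
        have "((\<lambda>t. X t i $ k) has_real_derivative ((\<Sum>j<d - 1. FGmat b i j *\<^sub>R X t j)
            + (\<Sum>j<d. FGmat b i j *\<^sub>R \<Omega> (chi t 0 + \<tau> 0 (zz t)) j)) $ k) (at t within I)"
          using H t i by (intro vec_comp_deriv) auto
        then show "((\<lambda>t. xk t i) has_real_derivative ((\<Sum>j<d-1. FGmat b i j * xk t j) + vk t i)) (at t within I)"
          unfolding xk_def vk_def by simp
      qed
      have vkb: "\<forall>t\<in>I. \<forall>i<d-1. \<bar>vk t i\<bar> \<le> real d * ((Sb + 1) * M\<Omega>)"
      proof (intro ballI allI impI)
        fix t i assume t: "t \<in> I" and i: "i < d-1"
        have "\<bar>vk t i\<bar> \<le> norm (\<Sum>j<d. FGmat b i j *\<^sub>R \<Omega> (chi t 0 + \<tau> 0 (zz t)) j)"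
          unfolding vk_def by (rule component_le_norm_cart)
        also have "\<dots> \<le> (\<Sum>j<d. norm (FGmat b i j *\<^sub>R \<Omega> (chi t 0 + \<tau> 0 (zz t)) j))" by (rule norm_sum)
        also have "\<dots> \<le> (\<Sum>j<d. (Sb + 1) * M\<Omega>)"
        proof (rule sum_mono)
          fix j assume j: "j \<in> {..<d}"
          have "\<bar>FGmat b i j\<bar> * norm (\<Omega> (chi t 0 + \<tau> 0 (zz t)) j) \<le> (Sb + 1) * M\<Omega>"
            using FGb[OF i, of j] M\<Omega>[of j] j M\<Omega>0 by (intro mult_mono) auto
          then show "norm (FGmat b i j *\<^sub>R \<Omega> (chi t 0 + \<tau> 0 (zz t)) j) \<le> (Sb + 1) * M\<Omega>" by simp
        qed
        also have "\<dots> = real d * ((Sb + 1) * M\<Omega>)" by simp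
        finally show "\<bar>vk t i\<bar> \<le> real d * ((Sb + 1) * M\<Omega>)" .
      qed
      from hurwitz_bound[OF I finR cardR negR dxk vkb]
      show "\<exists>B. \<forall>t\<in>I. \<forall>i<d-1. \<bar>X t i $ k\<bar> \<le> B" unfolding xk_def .
    qed
    then obtain BX where BX: "\<And>k t i. t \<in> I \<Longrightarrow> i < d-1 \<Longrightarrow> \<bar>X t i $ k\<bar> \<le> BX k" by metis
    have XB: "norm (X t i) \<le> (\<Sum>k\<in>UNIV. BX k)" if "t \<in> I" "i < d-1" for t i
      using norm_le_l1_cart[of "X t i"] BX[OF that] by (meson order.trans sum_mono)
    have sq: "\<bar>y\<bar> \<le> 1 + V0" if "y * y \<le> V0" for y V0 :: real
    proof (cases "\<bar>y\<bar> \<le> 1")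
      case True
      have "0 \<le> y * y" by simp
      then show ?thesis using True that by linarith
    next
      case False
      then have "\<bar>y\<bar> * 1 \<le> \<bar>y\<bar> * \<bar>y\<bar>" by (intro mult_left_mono) auto
      then show ?thesis using that by (simp add: abs_mult_self_eq)
    qed
    define r where "r t = (if 2 \<le> d then \<zeta> t 0 else 0) + w t 0" for t
    define Rb where "Rb = \<bar>B\<zeta>\<bar> + Wb"
    have rb: "\<bar>r t\<bar> \<le> Rb" if t: "t \<in> I" for t
    proof (cases "2 \<le> d")
      case True
      then have "\<bar>\<zeta> t 0\<bar> \<le> B\<zeta>" using B\<zeta>[OF t, of 0] by simp
      then show ?thesis unfolding r_def Rb_def using True Wb[OF t, of 0] d1 by simp
    next
      case False
      then show ?thesis unfolding r_def Rb_def using Wb[OF t, of 0] d1 by simp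
    qed
    have dchi0: "((\<lambda>t. chi t 0) has_real_derivative (- lam * chi t 0 + u t + r t)) (at t within I)" if t: "t \<in> I" for t
    proof -
      have "shiftA d (chi t) 0 - Kvec d b lam 0 * chi t 0 + b 0 * u t + w t 0 = - lam * chi t 0 + u t + r t"
        using d1 assms(21)
        by (cases "2 \<le> d") (simp_all add: shiftA_def Kvec_def r_def \<zeta>_def algebra_simps)
      then show ?thesis using dchi[OF t, of 0] d1 by simp
    qed
    define thd where "thd t = - (chi t 0 *\<^sub>R betav d (X t) \<Omega> (chi t 0 + \<tau> 0 (zz t))) - dzv dz (th t + \<theta> (fst (zz t)))" for t
    have dth: "(th has_vector_derivative thd t) (at t within I)" if "t \<in> I" for t
      using H that unfolding thd_def by blast
    define V where "V t = chi t 0 * chi t 0 + th t \<bullet> th t" for t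
    define V' where "V' t = 2 * (chi t 0 * (- lam * chi t 0 + u t + r t)) + 2 * (th t \<bullet> thd t)" for t
    have dV: "(V has_real_derivative V' t) (at t within I)" if t: "t \<in> I" for t
      unfolding V_def V'_def
      using DERIV_add[OF DERIV_mult[OF dchi0[OF t] dchi0[OF t]] inner_self_deriv[OF dth[OF t]]]
      by (simp add: algebra_simps)
    define C0 where "C0 = ell^2 + 2 * (2*ell+1) * Md + (2*ell+1)^2"
    have dzs: "- 2 * (th t \<bullet> dzv dz (th t + \<theta> (fst (zz t)))) \<le> - (th t \<bullet> th t) + real CARD('q) * C0"
      if t: "t \<in> I" for t
    proof -
      let ?c = "\<theta> (fst (zz t))"
      have e1: "th t \<bullet> dzv dz (th t + ?c) = (\<Sum>k\<in>UNIV. th t $ k * dz (th t $ k + ?c $ k))"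
        by (simp add: inner_vec_def dzv_def)
      have e2: "th t \<bullet> th t = (\<Sum>k\<in>UNIV. th t $ k * th t $ k)"
        by (simp add: inner_vec_def)
      have "- 2 * (\<Sum>k\<in>UNIV. th t $ k * dz (th t $ k + ?c $ k)) = (\<Sum>k\<in>UNIV. - 2 * (th t $ k * dz (th t $ k + ?c $ k)))"
        by (simp add: sum_distrib_left)
      also have "\<dots> \<le> (\<Sum>k\<in>UNIV. - (th t $ k * th t $ k) + C0)"
      proof (rule sum_mono)
        fix k :: 'q
        have "\<bar>?c $ k\<bar> < ell" using component_le_norm_cart[of ?c k] assms(25) zP[OF t] by fastforce
        then show "- 2 * (th t $ k * dz (th t $ k + ?c $ k)) \<le> - (th t $ k * th t $ k) + C0"
          unfolding C0_def by (rule scalar_dz[OF _ Md assms(28)])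
      qed
      also have "\<dots> = - (\<Sum>k\<in>UNIV. th t $ k * th t $ k) + real CARD('q) * C0"
        by (simp add: sum.distrib sum_negf sum_subtractf)
      finally show ?thesis unfolding e1 e2 .
    qed
    have V'le: "V' t \<le> - 1 * V t + (Rb^2 + real CARD('q) * C0)" if t: "t \<in> I" for t
    proof -
      have i1: "th t \<bullet> thd t = - (chi t 0 * u t) - th t \<bullet> dzv dz (th t + \<theta> (fst (zz t)))"
        unfolding thd_def u_def by (simp add: inner_diff_right inner_commute)
      have i2: "chi t 0 * chi t 0 \<le> lam * (chi t 0 * chi t 0)"
        using lam mult_right_mono[OF lam, of "chi t 0 * chi t 0"] by simp
      have i3: "2 * (chi t 0 * r t) \<le> chi t 0 * chi t 0 + r t * r t"
        using zero_le_square[of "chi t 0 - r t"] by (simp add: algebra_simps)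
      have i4: "r t * r t \<le> Rb^2"
      proof -
        have "\<bar>r t\<bar> * \<bar>r t\<bar> \<le> Rb * Rb" using rb[OF t] by (intro mult_mono) auto
        then show ?thesis by (simp add: power2_eq_square)
      qed
      show ?thesis unfolding V'_def V_def i1 using i2 i3 i4 dzs[OF t]
        by (simp add: algebra_simps)
    qed
    have Vle: "\<forall>t\<in>I. V t \<le> max (V 0) ((Rb^2 + real CARD('q) * C0) / 1)"
      using lyap[OF I dV V'le] by (simp del: div_by_1)
    define VM where "VM = max (V 0) (Rb^2 + real CARD('q) * C0)"
    have VM0: "VM \<ge> 0"
    proof -
      have "0 \<le> V 0" unfolding V_def by simp
      then show ?thesis unfolding VM_def by simp
    qed
    have chi0b: "\<bar>chi t 0\<bar> \<le> 1 + VM" if t: "t \<in> I" for t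
    proof -
      have Vt: "V t \<le> VM" using Vle t unfolding VM_def by simp
      have "chi t 0 * chi t 0 \<le> VM" using Vt inner_ge_zero[of "th t"] unfolding V_def by linarith
      then show ?thesis by (rule sq)
    qed
    have thb: "norm (th t) \<le> 1 + VM" if t: "t \<in> I" for t
    proof -
      have Vt: "V t \<le> VM" using Vle t unfolding VM_def by simp
      have "th t \<bullet> th t \<le> VM" using Vt zero_le_square[of "chi t 0"] unfolding V_def by linarith
      then have "norm (th t) * norm (th t) \<le> VM" by (simp add: power2_norm_eq_inner[symmetric] power2_eq_square)
      then show ?thesis using sq by fastforce
    qed
    define Bc where "Bc = 1 + VM"
    have chib: "\<bar>chi t i\<bar> \<le> \<bar>B\<zeta>\<bar> + Sb * Bc + Bc" if t: "t \<in> I" and i: "i < d" for t i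
    proof (cases i)
      case 0
      then show ?thesis using chi0b[OF t] Sb0 VM0 unfolding Bc_def
        by (smt (verit) mult_nonneg_nonneg abs_ge_zero)
    next
      case (Suc i')
      have e: "chi t i = \<zeta> t i' + b (i'+1) * chi t 0" unfolding \<zeta>_def Suc by simp
      have "\<bar>b (i'+1) * chi t 0\<bar> \<le> Sb * Bc" unfolding abs_mult Bc_def
        using Sb[of "i'+1"] Suc i chi0b[OF t] by (intro mult_mono) auto
      moreover have "\<bar>\<zeta> t i'\<bar> \<le> B\<zeta>" using B\<zeta>[OF t, of i'] Suc i by simp
      moreover have "0 \<le> Bc" unfolding Bc_def using VM0 by simp
      ultimately show ?thesis unfolding e by (smt (verit) abs_ge_self abs_triangle_ineq)
    qed
    show "\<exists>B. \<forall>t\<in>I. norm (zz t) \<le> B \<and> (\<forall>i<d. \<bar>chi t i\<bar> \<le> B) \<and> norm (th t) \<le> B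
                   \<and> (\<forall>i<d - 1. norm (X t i) \<le> B)"
    proof (intro exI[of _ "\<bar>Bz\<bar> + (\<bar>B\<zeta>\<bar> + Sb * Bc + Bc) + \<bar>\<Sum>k\<in>UNIV. BX k\<bar>"] ballI conjI allI impI)
      fix t assume t: "t \<in> I"
      have p: "0 \<le> Sb * Bc" "0 \<le> Bc" unfolding Bc_def using Sb0 VM0 by simp_all
      show "norm (zz t) \<le> \<bar>Bz\<bar> + (\<bar>B\<zeta>\<bar> + Sb * Bc + Bc) + \<bar>\<Sum>k\<in>UNIV. BX k\<bar>"
        using Bz[OF zZ[OF t]] p by linarith
      show "norm (th t) \<le> \<bar>Bz\<bar> + (\<bar>B\<zeta>\<bar> + Sb * Bc + Bc) + \<bar>\<Sum>k\<in>UNIV. BX k\<bar>"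
        using thb[OF t] p unfolding Bc_def by linarith
      fix i
      show "i < d \<Longrightarrow> \<bar>chi t i\<bar> \<le> \<bar>Bz\<bar> + (\<bar>B\<zeta>\<bar> + Sb * Bc + Bc) + \<bar>\<Sum>k\<in>UNIV. BX k\<bar>"
        using chib[OF t] p by fastforce
      show "i < d - 1 \<Longrightarrow> norm (X t i) \<le> \<bar>Bz\<bar> + (\<bar>B\<zeta>\<bar> + Sb * Bc + Bc) + \<bar>\<Sum>k\<in>UNIV. BX k\<bar>"
        using XB[OF t] p by fastforce
    qed
  qed
qed

end
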